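(* Let $\alpha,\beta\in\mathbb{C}$ with $\Re(\alpha)>-1$ and $\Re(\beta)>-1$, and let $n\geq 1$ be an integer. Then for all $z,w\in\mathbb{C}$ with $|z|<1$, $|w|<1$ and $w\notin(-1,0]$, $$\frac{\partial }{\partial z} P_{n}^{(\alpha ,\beta )} (z,w)+ \sqrt{w}\, \frac{\partial }{\partial w} P_{n}^{(\alpha ,\beta )} (z,w)-\frac{1+\alpha +\beta +n}{4}\, P_{n-1}^{(1+\alpha ,1+\beta )} (z,w)=0 .$$
   Context: For $\lambda\in\mathbb{C}$ and an integer $m\ge 0$, $(\lambda)_m$ denotes the Pochhammer symbol: $(\lambda)_0=1$ and $(\lambda)_m=\lambda(\lambda+1)\cdots(\lambda+m-1)$ for $m\ge1$. $\sqrt{w}$ denotes the principal branch of the square root. For $\alpha,\beta\in\mathbb{C}$ with $\Re(\alpha)>-1$, $\Re(\beta)>-1$ and an integer $n\ge 0$, the two-variable (complex bivariate) Jacobi polynomial is $$P_{n}^{(\alpha ,\beta )} (z,w)=\sum _{k=0}^{n} \frac{(1+\alpha)_{n}\, (1+\alpha +\beta)_{n+k}}{k!\,(n-k)!\,(1+\alpha)_{k}\, (1+\alpha +\beta)_{n} } \left(\frac{z-\sqrt{w} }{2} \right)^{k},$$ where the quotient $(1+\alpha+\beta)_{n+k}/(1+\alpha+\beta)_n$ is understood as $(1+\alpha+\beta+n)_k$. The symbol $P_{n-1}^{(1+\alpha ,1+\beta )}$ denotes the same polynomial with parameters $\alpha,\beta$ replaced by $1+\alpha,1+\beta$ and degree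 index $n-1$. *)

theory Defs
  imports "HOL-Analysis.Analysis"
begin

text \<open>Complex bivariate Jacobi polynomial. The quotient
  (1+a+b)_(n+k) / (1+a+b)_n is taken as (1+a+b+n)_k, as in the paper.
  csqrt is the principal branch of the complex square root.\<close>
definition jacobiP :: "complex \<Rightarrow> complex \<Rightarrow> nat \<Rightarrow> complex \<Rightarrow> complex \<Rightarrow> complex" where
  "jacobiP a b n z w =
     (\<Sum>k=0..n. pochhammer (1 + a) n * pochhammer (1 + a + b + of_nat n) k
        / (fact k * fact (n - k) * pochhammer (1 + a) k)
        * ((z - csqrt w) / 2) ^ k)"

end

theory Submission
  imports Defs
begin

lemma polysum_deriv:
  fixes c :: "nat \<Rightarrow> complex"
  assumes "(f has_field_derivative f') (at x)"
  shows "((\<lambda>x. \<Sum>k=0..n. c k * (f x) ^ k) has_field_derivative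
          (\<Sum>k=0..n. c k * (of_nat k * f x ^ (k - 1) * f'))) (at x)"
proof -
  have "((\<lambda>x. \<Sum>k=0..n. c k * (f x) ^ k) has_field_derivative
          (\<Sum>k=0..n. c k * (of_nat k * (f' * f x ^ (k - Suc 0))))) (at x)"
    by (rule DERIV_sum, rule DERIV_cmult, rule DERIV_power[OF assms])
  then show ?thesis by (simp add: mult_ac)
qed

lemma alg_aux:
  fixes A P N Q F G R s :: complex
  assumes "A \<noteq> 0" "R \<noteq> 0" "F \<noteq> 0" "G \<noteq> 0" "s \<noteq> 0"
  shows "A * P * (N * Q) / (s * F * G * (A * R)) * s = N * (P * Q / (F * G * R))"
  using assms by (simp add: field_simps)

theorem mainTheorem1:
  fixes a b z w :: complex and n :: nat
  assumes "Re a > -1" and "Re b > -1" and "n \<ge> 1"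
    and "cmod z < 1" and "cmod w < 1"
    and "w \<notin> complex_of_real ` {-1<..0}"
  shows "deriv (\<lambda>z'. jacobiP a b n z' w) z
         + csqrt w * deriv (\<lambda>w'. jacobiP a b n z w') w
         - (1 + a + b + of_nat n) / 4 * jacobiP (1 + a) (1 + b) (n - 1) z w = 0"
proof -
  obtain m where n: "n = Suc m" using assms(3) by (cases n) auto
  define c where "c = (\<lambda>k. pochhammer (1 + a) n * pochhammer (1 + a + b + of_nat n) k
        / (fact k * fact (n - k) * pochhammer (1 + a) k))"
  define u where "u = (z - csqrt w) / 2"
  have wnr: "w \<notin> \<real>\<^sub>\<le>\<^sub>0"
  proof
    assume "w \<in> \<real>\<^sub>\<le>\<^sub>0"
    then obtain r where r: "w = complex_of_real r" "r \<le> 0"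
      by (auto simp: nonpos_Reals_def)
    have "r > -1" using assms(5) r by auto
    then show False using assms(6) r by auto
  qed
  have w0: "csqrt w \<noteq> 0"
    using wnr by auto
  have J: "\<And>z' w'. jacobiP a b n z' w' = (\<Sum>k=0..n. c k * ((z' - csqrt w')/2) ^ k)"
    unfolding jacobiP_def c_def by simp
  have dz1: "((\<lambda>z'. (z' - csqrt w)/2) has_field_derivative 1/2) (at z)"
    by (auto intro!: derivative_eq_intros)
  have dw1: "((\<lambda>w'. (z - csqrt w')/2) has_field_derivative - (1 / (2 * csqrt w))/2) (at w)"
    using wnr by (auto intro!: derivative_eq_intros)
  have Dz: "deriv (\<lambda>z'. jacobiP a b n z' w) z = (\<Sum>k=0..n. c k * (of_nat k * u ^ (k - 1) * (1/2)))"
    unfolding J u_def by (rule DERIV_imp_deriv, rule polysum_deriv[OF dz1])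
  have Dw: "deriv (\<lambda>w'. jacobiP a b n z w') w = (\<Sum>k=0..n. c k * (of_nat k * u ^ (k - 1) * (- (1 / (2 * csqrt w))/2)))"
    unfolding J u_def by (rule DERIV_imp_deriv, rule polysum_deriv[OF dw1])
  have comb: "deriv (\<lambda>z'. jacobiP a b n z' w) z + csqrt w * deriv (\<lambda>w'. jacobiP a b n z w') w
      = (\<Sum>k=0..n. c k * of_nat k * u ^ (k - 1)) / 4"
    unfolding Dz Dw using w0
    by (simp add: sum_distrib_left sum_divide_distrib flip: sum.distrib) (simp add: field_simps)
  have a1: "pochhammer (1 + a) k \<noteq> 0" for k
  proof
    assume "pochhammer (1 + a) k = 0"
    then obtain j where "1 + a = - of_nat j" by (auto simp: pochhammer_eq_0_iff)
    then have "Re a = - 1 - real j" by (metis add_diff_cancel_left' diff_minus_eq_add minus_complex.simps(1) of_real_of_nat_eq Re_complex_of_real one_complex.simps(1) uminus_add_conv_diff of_nat_Suc)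
    then show False using assms(1) by simp
  qed
  have key: "c (Suc j) * of_nat (Suc j) = (1 + a + b + of_nat n) *
     (pochhammer (1 + (1 + a)) m * pochhammer (1 + (1 + a) + (1 + b) + of_nat m) j
        / (fact j * fact (m - j) * pochhammer (1 + (1 + a)) j))" if "j \<le> m" for j
  proof -
    have p1: "pochhammer (1 + a) n = (1 + a) * pochhammer (2 + a) m"
      unfolding n pochhammer_rec by (simp add: add_ac)
    have p2: "pochhammer (1 + a) (Suc j) = (1 + a) * pochhammer (2 + a) j"
      unfolding pochhammer_rec by (simp add: add_ac)
    have p3: "pochhammer (1 + a + b + of_nat n) (Suc j) = (1 + a + b + of_nat n) * pochhammer (3 + a + b + of_nat m) j"
      unfolding pochhammer_rec n by (simp add: add_ac)
    have aa: "1 + a \<noteq> 0" using a1[of 1] by simp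
    have bb: "pochhammer (2 + a) j \<noteq> 0" using a1[of "Suc j"] p2 by auto
    have f: "fact (Suc j) = of_nat (Suc j) * (fact j :: complex)" by simp
    have nj: "n - Suc j = m - j" using n by simp
    have e1: "1 + (1 + a) = 2 + a" "1 + (1 + a) + (1 + b) + of_nat m = 3 + a + b + of_nat m" "2 + a + (1 + b) + of_nat m = 3 + a + b + of_nat m" by (simp_all add: algebra_simps)
    show ?thesis unfolding c_def p1 p2 p3 nj e1 f
      by (rule alg_aux) (use aa bb of_nat_neq_0[of j, where ?'a=complex] in \<open>auto simp del: of_nat_Suc\<close>)
  qed
  have J2: "jacobiP (1 + a) (1 + b) (n - 1) z w = (\<Sum>j=0..m. pochhammer (1 + (1 + a)) m * pochhammer (1 + (1 + a) + (1 + b) + of_nat m) j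
        / (fact j * fact (m - j) * pochhammer (1 + (1 + a)) j) * u ^ j)"
    unfolding jacobiP_def u_def n by simp
  have "(\<Sum>k=0..n. c k * of_nat k * u ^ (k - 1)) = (\<Sum>j=0..m. c (Suc j) * of_nat (Suc j) * u ^ j)"
    unfolding n by (subst sum.atLeast0_atMost_Suc_shift) simp
  also have "\<dots> = (1 + a + b + of_nat n) * jacobiP (1 + a) (1 + b) (n - 1) z w"
    unfolding J2 sum_distrib_left
  proof (rule sum.cong[OF refl])
    fix j assume "j \<in> {0..m}"
    then have "j \<le> m" by simp
    from key[OF this] show "c (Suc j) * of_nat (Suc j) * u ^ j = (1 + a + b + of_nat n) *
     (pochhammer (1 + (1 + a)) m * pochhammer (1 + (1 + a) + (1 + b) + of_nat m) j
        / (fact j * fact (m - j) * pochhammer (1 + (1 + a)) j) * u ^ j)"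
      by (metis mult.assoc)
  qed
  finally show ?thesis using comb by simp
qed

end
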